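(* Let $\sigma$ be one of the semantics $\mathit{cf2}$, $\mathit{stg2}$, $\mathit{tfcf2}$, $\mathit{cf1.5}$, $\mathit{tfstg2}$, $\mathit{stg1.5}$. Then $\sigma(\mathcal{F})\subseteq\mathit{na}(\mathcal{F})$ for every argumentation framework $\mathcal{F}$. Consequently $\sigma$ satisfies the I-maximality criterion and the CF-reinstatement criterion.
   Context: An argumentation framework (AF) is $\mathcal{F}=(A_{\mathcal{F}},R_{\mathcal{F}})$ with $R_{\mathcal{F}}\subseteq A_{\mathcal{F}}\times A_{\mathcal{F}}$ (possibly infinite); $a\rightarrow b$ means $(a,b)\in R_{\mathcal{F}}$. $\mathcal{F}|_B=(A_{\mathcal{F}}\cap B,R_{\mathcal{F}}\cap(B\times B))$. Conflict-free: no $a,b\in S$ with $a\rightarrow b$. $\mathit{na}(\mathcal{F})$ = set of naive extensions ($\subseteq$-maximal conflict-free sets). $S^\oplus=S\cup\{x:\exists y\in S,\ y\rightarrow x\}$; stage extension: conflict-free $S$ with no conflict-free $T$ such that $S^\oplus\subsetneq T^\oplus$. $S$ defends $a$ if every attacker of $a$ is attacked by some element of $S$. I-maximality: for all $\mathcal{F}$ and $S_1,S_2\in\sigma(\mathcal{F})$, $S_1\subseteq S_2$ implies $S_1=S_2$. CF-reinstatement: for all $\mathcal{F}$ and $S\in\sigma(\mathcal{F})$, if $S$ defends $a$ and $S\cup\{a\}$ is conflict-free then $a\in S$. $\mathrm{SCC}(\mathcal{F})$, $\mathrm{SCC}(a)$: strongly connected components of the attack graph (paths possibly of length 0). $D_S(X)=\{b\in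 X:\exists a\in S\setminus X,\ a\rightarrow b\}$. $\mathit{cf2}$: $S\in\mathit{cf2}(\mathcal{F})$ iff either $|\mathrm{SCC}(\mathcal{F})|=1$ and $S$ is naive in $\mathcal{F}$, or $|\mathrm{SCC}(\mathcal{F})|\ne1$ and for each $X\in\mathrm{SCC}(\mathcal{F})$, $S\cap X\in\mathit{cf2}(\mathcal{F}|_{X\setminus D_S(X)})$, recursively; $S$ is a member only when this recursion is well-founded (no infinite chain of recursive calls) and succeeds. $\mathit{stg2}$: same with stage for naive. $\mathit{tfcf2}$/$\mathit{tfstg2}$: $C^0_S(a)=\mathrm{SCC}(a)$; $C^{\alpha+1}_S(a)$ = component of $a$ in $\mathcal{F}|_{C^\alpha_S(a)\setminus D_S(C^\alpha_S(a))}$ (empty if $a$ not there); for limit $\lambda$, $C^\lambda_S(a)$ = component of $a$ in $\mathcal{F}|_{\bigcap_{\alpha<\lambda}C^\alpha_S(a)}$; $\alpha_S(a)$ = least $\alpha$ with $a\notin C^\alpha_S(a)$ or $C^{\alpha+1}_S(a)=C^\alpha_S(a)$; $S\in\mathit{tfcf2}(\mathcal{F})$ (resp. $\mathit{tfstg2}$) iff $S$ conflict-free and for each $a$, $a\notin C^{\alpha_S(a)}_S(a)$ or $S\cap C^{\alpha_S(a)}_S(a)$ is naive (resp. stage) in $\mathcal{F}|_{C^{\alpha_S(a)}_S(a)}$. $\mathit{cf1.5}$/$\mathit{stg1.5}$: $S$ conflict-free and for each $X\in\mathrm{SCC}(\mathcal{F})$, $S\cap X$ is naive (resp. stage) in $\mathcal{F}|_{X\setminus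 D_S(X)}$. *)

theory Defs
  imports Main
begin

type_synonym 'a af = "'a set \<times> ('a \<times> 'a) set"

definition args :: "'a af \<Rightarrow> 'a set" where "args F = fst F"
definition att :: "'a af \<Rightarrow> ('a \<times> 'a) set" where "att F = snd F"

definition wf_af :: "'a af \<Rightarrow> bool" where
  "wf_af F \<longleftrightarrow> att F \<subseteq> args F \<times> args F"

definition restr :: "'a af \<Rightarrow> 'a set \<Rightarrow> 'a af" where
  "restr F B = (args F \<inter> B, att F \<inter> (B \<times> B))"

definition conflict_free :: "'a af \<Rightarrow> 'a set \<Rightarrow> bool" where
  "conflict_free F S \<longleftrightarrow> S \<subseteq> args F \<and> (\<forall>a\<in>S. \<forall>b\<in>S. (a, b) \<notin> att F)"

definition naive :: "'a af \<Rightarrow> 'a set \<Rightarrow> bool" where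
  "naive F S \<longleftrightarrow> conflict_free F S \<and> (\<forall>T. conflict_free F T \<and> S \<subseteq> T \<longrightarrow> T = S)"

definition na :: "'a af \<Rightarrow> 'a set set" where
  "na F = {S. naive F S}"

definition range_plus :: "'a af \<Rightarrow> 'a set \<Rightarrow> 'a set" where
  "range_plus F S = S \<union> {x. \<exists>y\<in>S. (y, x) \<in> att F}"

definition stage :: "'a af \<Rightarrow> 'a set \<Rightarrow> bool" where
  "stage F S \<longleftrightarrow> conflict_free F S \<and>
     \<not> (\<exists>T. conflict_free F T \<and> range_plus F S \<subset> range_plus F T)"

definition defends :: "'a af \<Rightarrow> 'a set \<Rightarrow> 'a \<Rightarrow> bool" where
  "defends F S a \<longleftrightarrow> (\<forall>b. (b, a) \<in> att F \<longrightarrow> (\<exists>c\<in>S. (c, b) \<in> att F))"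

text \<open>SCC(a): arguments mutually reachable with a (paths of length 0 allowed);
empty if a is not an argument.\<close>
definition scc :: "'a af \<Rightarrow> 'a \<Rightarrow> 'a set" where
  "scc F a = {b \<in> args F. a \<in> args F \<and> (a, b) \<in> (att F)\<^sup>* \<and> (b, a) \<in> (att F)\<^sup>*}"

definition SCCs :: "'a af \<Rightarrow> 'a set set" where
  "SCCs F = {scc F a | a. a \<in> args F}"

definition D :: "'a af \<Rightarrow> 'a set \<Rightarrow> 'a set \<Rightarrow> 'a set" where
  "D F S X = {b \<in> X. \<exists>a \<in> S - X. (a, b) \<in> att F}"

text \<open>Least fixed point = membership only via a well-founded recursion.\<close>
inductive scc_rec :: "('a af \<Rightarrow> 'a set \<Rightarrow> bool) \<Rightarrow> 'a af \<Rightarrow> 'a set \<Rightarrow> bool"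
  for base :: "'a af \<Rightarrow> 'a set \<Rightarrow> bool" where
  single: "\<exists>X. SCCs F = {X} \<Longrightarrow> base F S \<Longrightarrow> scc_rec base F S"
| multi: "\<not> (\<exists>X. SCCs F = {X}) \<Longrightarrow> S \<subseteq> args F \<Longrightarrow>
          (\<forall>X \<in> SCCs F. scc_rec base (restr F (X - D F S X)) (S \<inter> X)) \<Longrightarrow> scc_rec base F S"

definition cf2 :: "'a af \<Rightarrow> 'a set set" where "cf2 F = {S. scc_rec naive F S}"
definition stg2 :: "'a af \<Rightarrow> 'a set set" where "stg2 F = {S. scc_rec stage F S}"

definition cf15 :: "'a af \<Rightarrow> 'a set set" where
  "cf15 F = {S. conflict_free F S \<and>
     (\<forall>X \<in> SCCs F. naive (restr F (X - D F S X)) (S \<inter> X))}"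

definition stg15 :: "'a af \<Rightarrow> 'a set set" where
  "stg15 F = {S. conflict_free F S \<and>
     (\<forall>X \<in> SCCs F. stage (restr F (X - D F S X)) (S \<inter> X))}"

definition comp :: "'a af \<Rightarrow> 'a set \<Rightarrow> 'a \<Rightarrow> 'a set" where
  "comp F B a = scc (restr F B) a"

text \<open>The class {C^alpha_S(a) | alpha ordinal}: the least family containing
C^0 = SCC(a), closed under the successor step and under the limit step
(component of a in the intersection of any nonempty subfamily).\<close>
inductive_set tower :: "'a af \<Rightarrow> 'a set \<Rightarrow> 'a \<Rightarrow> 'a set set"
  for F :: "'a af" and S :: "'a set" and a :: 'a where
  zero: "scc F a \<in> tower F S a"
| succ: "X \<in> tower F S a \<Longrightarrow> comp F (X - D F S X) a \<in> tower F S a"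
| lim: "\<forall>Y \<in> M. Y \<in> tower F S a \<Longrightarrow> M \<noteq> {} \<Longrightarrow> comp F (\<Inter>M) a \<in> tower F S a"

text \<open>C^{alpha_S(a)}_S(a) with a in it is exactly a stage X of the tower containing a
with C^{alpha+1} = C^alpha, i.e. a fixed point of the successor step.\<close>
definition tf_sem :: "('a af \<Rightarrow> 'a set \<Rightarrow> bool) \<Rightarrow> 'a af \<Rightarrow> 'a set set" where
  "tf_sem base F = {S. conflict_free F S \<and>
     (\<forall>a \<in> args F. \<forall>X \<in> tower F S a.
        (a \<notin> X \<or> comp F (X - D F S X) a = X) \<longrightarrow>
        (a \<notin> X \<or> base (restr F X) (S \<inter> X)))}"

definition tfcf2 :: "'a af \<Rightarrow> 'a set set" where "tfcf2 F = tf_sem naive F"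
definition tfstg2 :: "'a af \<Rightarrow> 'a set set" where "tfstg2 F = tf_sem stage F"

definition I_maximal :: "('a af \<Rightarrow> 'a set set) \<Rightarrow> bool" where
  "I_maximal \<sigma> \<longleftrightarrow> (\<forall>F. wf_af F \<longrightarrow>
     (\<forall>S1 \<in> \<sigma> F. \<forall>S2 \<in> \<sigma> F. S1 \<subseteq> S2 \<longrightarrow> S1 = S2))"

definition CF_reinstatement :: "('a af \<Rightarrow> 'a set set) \<Rightarrow> bool" where
  "CF_reinstatement \<sigma> \<longleftrightarrow> (\<forall>F. wf_af F \<longrightarrow>
     (\<forall>S \<in> \<sigma> F. \<forall>a. defends F S a \<and> conflict_free F (insert a S) \<longrightarrow> a \<in> S))"

end

theory Submission
  imports Defs
begin

lemma stage_naive: "stage F S \<Longrightarrow> naive F S"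
proof -
  assume st: "stage F S"
  have cS: "conflict_free F S" and ns: "\<not> (\<exists>T. conflict_free F T \<and> range_plus F S \<subset> range_plus F T)"
    using st unfolding stage_def by auto
  show "naive F S" unfolding naive_def
  proof (intro conjI allI impI)
    show "conflict_free F S" by fact
    fix T assume cT: "conflict_free F T \<and> S \<subseteq> T"
    show "T = S"
    proof (rule ccontr)
      assume "T \<noteq> S"
      with cT obtain t where t: "t \<in> T" "t \<notin> S" by blast
      have "range_plus F S \<subseteq> range_plus F T" using cT unfolding range_plus_def by blast
      moreover have "t \<in> range_plus F T" using t unfolding range_plus_def by blast
      moreover have "t \<notin> range_plus F S" using t cT unfolding range_plus_def conflict_free_def by blast
      ultimately have "range_plus F S \<subset> range_plus F T" by blast
      with ns cT show False by blast
    qed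
  qed
qed

lemma scc_self: "a \<in> args F \<Longrightarrow> a \<in> scc F a"
  unfolding scc_def by auto

lemma scc_args: "b \<in> scc F a \<Longrightarrow> b \<in> args F"
  unfolding scc_def by auto

lemma scc_in: "a \<in> args F \<Longrightarrow> scc F a \<in> SCCs F"
  unfolding SCCs_def by auto

lemma comp_sub: "comp F B a \<subseteq> B"
  unfolding comp_def scc_def restr_def args_def by auto

lemma comp_self: "a \<in> args F \<Longrightarrow> a \<in> B \<Longrightarrow> a \<in> comp F B a"
  unfolding comp_def by (rule scc_self) (simp add: restr_def args_def)

lemma naive_restr_ext:
  assumes nv: "naive (restr F Y) (S \<inter> X)" and Y: "Y \<subseteq> X"
    and a: "a \<in> args F" "a \<in> Y"
    and cf: "conflict_free F (insert a S)"
  shows "a \<in> S"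
proof -
  have "conflict_free (restr F Y) (insert a (S \<inter> X))"
    using nv a cf unfolding naive_def conflict_free_def restr_def args_def att_def by auto
  with nv have "insert a (S \<inter> X) = S \<inter> X" unfolding naive_def by blast
  thus ?thesis by blast
qed

lemma notD: "conflict_free F (insert a S) \<Longrightarrow> a \<notin> D F S X"
  unfolding conflict_free_def D_def by auto

lemma scc_rec_naive:
  assumes bn: "\<And>F S. base F S \<Longrightarrow> naive F S"
  shows "scc_rec base F S \<Longrightarrow> naive F S"
proof (induction rule: scc_rec.induct)
  case (single F S)
  then show ?case using bn by blast
next
  case (multi F S)
  have cf: "conflict_free F S"
    unfolding conflict_free_def
  proof (intro conjI ballI)
    show "S \<subseteq> args F" by fact
    fix a b assume ab: "a \<in> S" "b \<in> S"
    show "(a, b) \<notin> att F"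
    proof
      assume e: "(a, b) \<in> att F"
      let ?X = "scc F b"
      have b: "b \<in> args F" using ab multi(2) by blast
      have nX: "naive (restr F (?X - D F S ?X)) (S \<inter> ?X)"
        using multi(3) scc_in[OF b] by blast
      have bX: "b \<in> S \<inter> ?X" using ab scc_self[OF b] by blast
      hence bnd: "b \<notin> D F S ?X" using nX unfolding naive_def conflict_free_def restr_def args_def by auto
      show False
      proof (cases "a \<in> ?X")
        case True
        hence "a \<in> S \<inter> ?X" using ab by blast
        hence "a \<notin> D F S ?X" using nX unfolding naive_def conflict_free_def restr_def args_def by auto
        with bnd bX \<open>a \<in> S \<inter> ?X\<close> e nX show False
          unfolding naive_def conflict_free_def restr_def att_def args_def by auto
      next
        case False
        hence "b \<in> D F S ?X" using ab e bX unfolding D_def by blast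
        with bnd show False by blast
      qed
    qed
  qed
  show ?case unfolding naive_def
  proof (intro conjI allI impI)
    show "conflict_free F S" by fact
    fix T assume T: "conflict_free F T \<and> S \<subseteq> T"
    show "T = S"
    proof (rule ccontr)
      assume "T \<noteq> S"
      with T obtain a where a: "a \<in> T" "a \<notin> S" by blast
      have aA: "a \<in> args F" using a T unfolding conflict_free_def by blast
      have cfa: "conflict_free F (insert a S)" using T a unfolding conflict_free_def by blast
      let ?X = "scc F a"
      have nX: "naive (restr F (?X - D F S ?X)) (S \<inter> ?X)"
        using multi(3) scc_in[OF aA] by blast
      have "a \<in> S"
        by (rule naive_restr_ext[OF nX _ aA _ cfa]) (use scc_self[OF aA] notD[OF cfa] in auto)
      with a show False by blast
    qed
  qed
qed

lemma local_naive:
  assumes cf: "conflict_free F S"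
    and h: "\<And>a T. a \<in> args F \<Longrightarrow> a \<notin> S \<Longrightarrow> conflict_free F (insert a S) \<Longrightarrow> a \<in> S"
  shows "naive F S"
  unfolding naive_def
proof (intro conjI allI impI)
  show "conflict_free F S" by fact
  fix T assume T: "conflict_free F T \<and> S \<subseteq> T"
  show "T = S"
  proof (rule ccontr)
    assume "T \<noteq> S"
    with T obtain a where a: "a \<in> T" "a \<notin> S" by blast
    have aA: "a \<in> args F" using a T unfolding conflict_free_def by blast
    have cfa: "conflict_free F (insert a S)" using T a unfolding conflict_free_def by blast
    from h[OF aA a(2) cfa] a show False by blast
  qed
qed

lemma cf15_gen:
  assumes bn: "\<And>F S. base F S \<Longrightarrow> naive F S"
    and cf: "conflict_free F S"
    and X: "\<forall>X \<in> SCCs F. base (restr F (X - D F S X)) (S \<inter> X)"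
  shows "naive F S"
proof (rule local_naive[OF cf])
  fix a assume aA: "a \<in> args F" and cfa: "conflict_free F (insert a S)"
  let ?X = "scc F a"
  have nX: "naive (restr F (?X - D F S ?X)) (S \<inter> ?X)"
    using X scc_in[OF aA] bn by blast
  show "a \<in> S"
    by (rule naive_restr_ext[OF nX _ aA _ cfa]) (use scc_self[OF aA] notD[OF cfa] in auto)
qed

lemma tower_a:
  assumes aA: "a \<in> args F" and cfa: "conflict_free F (insert a S)"
  shows "X \<in> tower F S a \<Longrightarrow> a \<in> X"
proof (induction rule: tower.induct)
  case zero
  then show ?case using scc_self[OF aA] .
next
  case (succ X)
  have "a \<in> X - D F S X" using succ.IH notD[OF cfa, of X] by blast
  then show ?case by (rule comp_self[OF aA])
next
  case (lim M)
  have "a \<in> \<Inter>M" using lim.IH by blast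
  then show ?case by (rule comp_self[OF aA])
qed

lemma tf_gen:
  assumes bn: "\<And>F S. base F S \<Longrightarrow> naive F S"
    and S: "S \<in> tf_sem base F"
  shows "naive F S"
proof -
  have cf: "conflict_free F S" and H: "\<forall>a \<in> args F. \<forall>X \<in> tower F S a.
        (a \<notin> X \<or> comp F (X - D F S X) a = X) \<longrightarrow>
        (a \<notin> X \<or> base (restr F X) (S \<inter> X))"
    using S unfolding tf_sem_def mem_Collect_eq by (blast, blast)
  show ?thesis
  proof (rule local_naive[OF cf])
    fix a assume aA: "a \<in> args F" and cfa: "conflict_free F (insert a S)"
    let ?T = "tower F S a"
    let ?X = "\<Inter> ?T"
    have "scc F a \<in> ?T" by (rule tower.zero)
    hence ne: "?T \<noteq> {}" by blast
    have Y: "comp F ?X a \<in> ?T" by (rule tower.lim) (use ne in auto)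
    have XT: "?X \<in> ?T"
    proof -
      have "comp F ?X a \<subseteq> ?X" by (rule comp_sub)
      moreover have "?X \<subseteq> comp F ?X a" using Y by (rule Inter_lower)
      ultimately have "comp F ?X a = ?X" by (rule equalityI)
      with Y show ?thesis by simp
    qed
    have aX: "a \<in> ?X" using tower_a[OF aA cfa] by (rule InterI)
    have Z: "comp F (?X - D F S ?X) a \<in> ?T" by (rule tower.succ[OF XT])
    have fixp: "comp F (?X - D F S ?X) a = ?X"
    proof
      show "comp F (?X - D F S ?X) a \<subseteq> ?X" by (rule order_trans[OF comp_sub Diff_subset])
      show "?X \<subseteq> comp F (?X - D F S ?X) a" using Z by (rule Inter_lower)
    qed
    have "(a \<notin> ?X \<or> comp F (?X - D F S ?X) a = ?X) \<longrightarrow> (a \<notin> ?X \<or> base (restr F ?X) (S \<inter> ?X))"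
      by (rule bspec[OF bspec[OF H aA] XT])
    hence "base (restr F ?X) (S \<inter> ?X)" using fixp aX by simp
    hence nX: "naive (restr F ?X) (S \<inter> ?X)" by (rule bn)
    show "a \<in> S" by (rule naive_restr_ext[OF nX _ aA aX cfa]) simp
  qed
qed

theorem theorem10:
  fixes \<sigma> :: "'a af \<Rightarrow> 'a set set"
  assumes "\<sigma> \<in> {cf2, stg2, tfcf2, cf15, tfstg2, stg15}"
  shows "(\<forall>F. wf_af F \<longrightarrow> \<sigma> F \<subseteq> na F) \<and> I_maximal \<sigma> \<and> CF_reinstatement \<sigma>"
proof -
  have N: "\<forall>F. \<sigma> F \<subseteq> na F"
  proof (intro allI subsetI)
    fix F S assume S: "S \<in> \<sigma> F"
    have sn: "\<And>F S. stage F S \<Longrightarrow> naive F S" by (rule stage_naive)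
    have nn: "\<And>F S. naive F S \<Longrightarrow> naive F S" .
    from assms have "naive F S"
    proof (elim insertE emptyE)
      assume "\<sigma> = cf2" thus ?thesis using S scc_rec_naive[OF nn] unfolding cf2_def by blast
    next
      assume "\<sigma> = stg2" thus ?thesis using S scc_rec_naive[OF sn] unfolding stg2_def by blast
    next
      assume "\<sigma> = tfcf2" thus ?thesis using S tf_gen[OF nn] unfolding tfcf2_def by blast
    next
      assume "\<sigma> = tfstg2" thus ?thesis using S tf_gen[OF sn] unfolding tfstg2_def by blast
    next
      assume "\<sigma> = cf15" thus ?thesis using S cf15_gen[OF nn, where F=F and S=S] unfolding cf15_def by blast
    next
      assume "\<sigma> = stg15" thus ?thesis using S cf15_gen[OF sn, where F=F and S=S] unfolding stg15_def by blast
    qed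
    thus "S \<in> na F" unfolding na_def by simp
  qed
  have I: "I_maximal \<sigma>" unfolding I_maximal_def
  proof (intro allI impI ballI)
    fix F S1 S2 assume "S1 \<in> \<sigma> F" "S2 \<in> \<sigma> F" "S1 \<subseteq> S2"
    thus "S1 = S2" using N unfolding na_def naive_def by blast
  qed
  have C: "CF_reinstatement \<sigma>" unfolding CF_reinstatement_def
  proof (intro allI impI ballI)
    fix F S a assume "S \<in> \<sigma> F" "defends F S a \<and> conflict_free F (insert a S)"
    thus "a \<in> S" using N unfolding na_def naive_def by blast
  qed
  show ?thesis using N I C by blast
qed

end
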